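(* Fix one of the following settings, with $\phi,\sigma$ commuting $\mathbb{C}$-linear automorphisms of $K$: (2S) $K=\mathbb{C}(x)$, $\phi(x)=x+h_1$, $\sigma(x)=x+h_2$, $h_1/h_2\notin\mathbb{Q}$; (2Q) $K=\bigcup_{j\ge1}\mathbb{C}(x^{1/j})$, $\phi(x)=q_1x$, $\sigma(x)=q_2x$, with $q_1,q_2\in\mathbb{C}^*$ multiplicatively independent and not both algebraic numbers of modulus one all of whose Galois conjugates have modulus one; (2M) $K=\bigcup_{j\ge1}\mathbb{C}(x^{1/j})$, $\phi(x)=x^{p_1}$, $\sigma(x)=x^{p_2}$, $p_1,p_2$ multiplicatively independent natural numbers. Let $\tilde a\in K^*$, $\tilde b\in K$, and assume that there exists a $\sigma$-Picard–Vessiot extension $L_A$ over $K$ for $\phi(Y)=AY$ with $A=\begin{pmatrix}\tilde a&\tilde b\\0&1\end{pmatrix}$ which is a field. Let $L$ be a field with $K\subset L\subset L_A$ and $\phi(L)\subset L$, and let $x\in L_A^*$ be such that $\phi(x)/x=\alpha\in L^*$. If the equation $\phi(y)=\tilde ay+\tilde b$ has a solution in $L(x)$, then it has a solution in $L$.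
   Context: For $A\in\mathrm{GL}_n(K)$, a $\sigma$-Picard–Vessiot extension for $\phi(Y)=AY$ over $K$ which is a field is a field extension $L_A$ of $K$ with commuting endomorphisms $\phi,\sigma$ extending those of $K$ such that there is $U\in\mathrm{GL}_n(L_A)$ with $\phi(U)=AU$, $L_A$ is generated as a field over $K$ by the entries of $\sigma^i(U)$, $i\ge0$, and $L_A^\phi=K^\phi=\mathbb{C}$. *)

theory Defs
  imports "HOL-Analysis.Analysis" "HOL-Computational_Algebra.Polynomial"
begin

definition field_endo :: "('a::field \<Rightarrow> 'a) \<Rightarrow> bool" where
  "field_endo f \<longleftrightarrow> f 1 = 1 \<and> (\<forall>a b. f (a + b) = f a + f b) \<and> (\<forall>a b. f (a * b) = f a * f b)"

definition complex_emb :: "(complex \<Rightarrow> 'a::field) \<Rightarrow> bool" where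
  "complex_emb e \<longleftrightarrow> e 1 = 1 \<and> (\<forall>a b. e (a + b) = e a + e b) \<and> (\<forall>a b. e (a * b) = e a * e b)"

definition subfield :: "'a::field set \<Rightarrow> bool" where
  "subfield F \<longleftrightarrow> 0 \<in> F \<and> 1 \<in> F \<and> (\<forall>a\<in>F. \<forall>b\<in>F. a + b \<in> F \<and> a * b \<in> F)
     \<and> (\<forall>a\<in>F. - a \<in> F \<and> inverse a \<in> F)"

definition field_gen :: "'a::field set \<Rightarrow> 'a set \<Rightarrow> 'a set" where
  "field_gen S T = \<Inter>{F. subfield F \<and> S \<union> T \<subseteq> F}"

definition transc :: "(complex \<Rightarrow> 'a::field) \<Rightarrow> 'a \<Rightarrow> bool" where
  "transc e t \<longleftrightarrow> (\<forall>p::complex poly. p \<noteq> 0 \<longrightarrow> poly (map_poly e p) t \<noteq> 0)"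

definition mult_indep :: "complex \<Rightarrow> complex \<Rightarrow> bool" where
  "mult_indep q1 q2 \<longleftrightarrow> (\<forall>m n :: int. q1 powi m * q2 powi n = 1 \<longrightarrow> m = 0 \<and> n = 0)"

(* c is a Galois conjugate of q over Q: a root of the minimal polynomial of q,
   i.e. a root of every rational polynomial vanishing at q *)
definition galois_conj :: "complex \<Rightarrow> complex \<Rightarrow> bool" where
  "galois_conj q c \<longleftrightarrow> (\<forall>p::complex poly. (\<forall>i. coeff p i \<in> \<rat>) \<longrightarrow> poly p q = 0 \<longrightarrow> poly p c = 0)"

definition unimod_alg :: "complex \<Rightarrow> bool" where
  "unimod_alg q \<longleftrightarrow> algebraic q \<and> cmod q = 1 \<and> (\<forall>c. galois_conj q c \<longrightarrow> cmod c = 1)"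

definition base_auts :: "(complex \<Rightarrow> 'a::field) \<Rightarrow> ('a \<Rightarrow> 'a) \<Rightarrow> ('a \<Rightarrow> 'a) \<Rightarrow> 'a set \<Rightarrow> bool" where
  "base_auts e \<phi> \<sigma> K \<longleftrightarrow> \<phi> ` K = K \<and> \<sigma> ` K = K \<and> (\<forall>c. \<phi> (e c) = e c \<and> \<sigma> (e c) = e c)
     \<and> (\<forall>y\<in>K. \<phi> (\<sigma> y) = \<sigma> (\<phi> y))"

definition setting_2S :: "(complex \<Rightarrow> 'a::field) \<Rightarrow> ('a \<Rightarrow> 'a) \<Rightarrow> ('a \<Rightarrow> 'a) \<Rightarrow> 'a set \<Rightarrow> bool" where
  "setting_2S e \<phi> \<sigma> K \<longleftrightarrow> (\<exists>t h1 h2. transc e t \<and> K = field_gen (range e) {t}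
     \<and> \<phi> t = t + e h1 \<and> \<sigma> t = t + e h2 \<and> h1 / h2 \<notin> \<rat>)"

(* K = union over j >= 1 of C(t^(1/j)): r j plays the role of t^(1/j),
   with compatible roots r(j*k)^k = r j and t = r 1 transcendental over C *)
definition puiseux_field :: "(complex \<Rightarrow> 'a::field) \<Rightarrow> (nat \<Rightarrow> 'a) \<Rightarrow> 'a set \<Rightarrow> bool" where
  "puiseux_field e r K \<longleftrightarrow> transc e (r 1) \<and> (\<forall>j\<ge>1. \<forall>k\<ge>1. r (j * k) ^ k = r j)
     \<and> K = field_gen (range e) (r ` {1..})"

definition setting_2Q :: "(complex \<Rightarrow> 'a::field) \<Rightarrow> ('a \<Rightarrow> 'a) \<Rightarrow> ('a \<Rightarrow> 'a) \<Rightarrow> 'a set \<Rightarrow> bool" where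
  "setting_2Q e \<phi> \<sigma> K \<longleftrightarrow> (\<exists>r q1 q2. puiseux_field e r K
     \<and> \<phi> (r 1) = e q1 * r 1 \<and> \<sigma> (r 1) = e q2 * r 1
     \<and> q1 \<noteq> 0 \<and> q2 \<noteq> 0 \<and> mult_indep q1 q2 \<and> \<not> (unimod_alg q1 \<and> unimod_alg q2))"

definition setting_2M :: "(complex \<Rightarrow> 'a::field) \<Rightarrow> ('a \<Rightarrow> 'a) \<Rightarrow> ('a \<Rightarrow> 'a) \<Rightarrow> 'a set \<Rightarrow> bool" where
  "setting_2M e \<phi> \<sigma> K \<longleftrightarrow> (\<exists>r (p1::nat) (p2::nat). puiseux_field e r K
     \<and> \<phi> (r 1) = r 1 ^ p1 \<and> \<sigma> (r 1) = r 1 ^ p2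
     \<and> mult_indep (of_nat p1) (of_nat p2))"

definition mat2 :: "'a::zero \<Rightarrow> 'a \<Rightarrow> 'a \<Rightarrow> 'a \<Rightarrow> 'a^2^2" where
  "mat2 a b c d = (\<chi> i j. if i = 1 then (if j = 1 then a else b) else (if j = 1 then c else d))"

definition map_mat :: "('a \<Rightarrow> 'a) \<Rightarrow> 'a^'n^'m \<Rightarrow> 'a^'n^'m" where
  "map_mat f M = (\<chi> i j. f (M $ i $ j))"

(* L_A (the type 'a, a field) is a sigma-Picard-Vessiot extension over K for phi(Y) = A Y *)
definition sigma_PV_field :: "(complex \<Rightarrow> 'a::field) \<Rightarrow> ('a \<Rightarrow> 'a) \<Rightarrow> ('a \<Rightarrow> 'a) \<Rightarrow> 'a set
     \<Rightarrow> 'a^'n^'n \<Rightarrow> bool" where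
  "sigma_PV_field e \<phi> \<sigma> K A \<longleftrightarrow> field_endo \<phi> \<and> field_endo \<sigma> \<and> \<phi> \<circ> \<sigma> = \<sigma> \<circ> \<phi>
     \<and> (\<exists>U::'a^'n^'n. invertible U \<and> map_mat \<phi> U = A ** U
          \<and> UNIV = field_gen K {(\<sigma> ^^ i) (U $ k $ l) | i k l. True})
     \<and> {y. \<phi> y = y} = range e"

end

theory Submission imports Defs "HOL-Computational_Algebra.Polynomial_FPS" begin

lemma sf:
  assumes "subfield L"
  shows sf0: "0 \<in> L" and sf1: "1 \<in> L"
    and sfadd: "a \<in> L \<Longrightarrow> b \<in> L \<Longrightarrow> a + b \<in> L"
    and sfmult: "a \<in> L \<Longrightarrow> b \<in> L \<Longrightarrow> a * b \<in> L"
    and sfneg: "a \<in> L \<Longrightarrow> - a \<in> L"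
    and sfinv: "a \<in> L \<Longrightarrow> inverse a \<in> L"
    and sfdiff: "a \<in> L \<Longrightarrow> b \<in> L \<Longrightarrow> a - b \<in> L"
    and sfdiv: "a \<in> L \<Longrightarrow> b \<in> L \<Longrightarrow> a / b \<in> L"
proof -
  have *: "0 \<in> L" "1 \<in> L" "\<And>a b. a\<in>L \<Longrightarrow> b\<in>L \<Longrightarrow> a + b \<in> L \<and> a * b \<in> L"
     "\<And>a. a\<in>L \<Longrightarrow> - a \<in> L \<and> inverse a \<in> L"
    using assms unfolding subfield_def by blast+
  show "0 \<in> L" "1 \<in> L" by (fact *(1,2))+
  show "a \<in> L \<Longrightarrow> b \<in> L \<Longrightarrow> a + b \<in> L" "a \<in> L \<Longrightarrow> b \<in> L \<Longrightarrow> a * b \<in> L"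
    "a \<in> L \<Longrightarrow> - a \<in> L" "a \<in> L \<Longrightarrow> inverse a \<in> L" using * by blast+
  show "a \<in> L \<Longrightarrow> b \<in> L \<Longrightarrow> a - b \<in> L" using * by (metis diff_conv_add_uminus)
  show "a \<in> L \<Longrightarrow> b \<in> L \<Longrightarrow> a / b \<in> L" using * by (metis divide_inverse)
qed

lemma sfpow: "subfield L \<Longrightarrow> a \<in> L \<Longrightarrow> a ^ n \<in> L"
  by (induction n) (auto intro: sf1 sfmult)

lemma sfsum: "subfield L \<Longrightarrow> (\<And>x. x \<in> A \<Longrightarrow> f x \<in> L) \<Longrightarrow> sum f A \<in> L"
  by (induction A rule: infinite_finite_induct) (auto intro: sf0 sfadd)

definition Lpoly :: "'a::field set \<Rightarrow> 'a poly \<Rightarrow> bool" where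
  "Lpoly L p \<longleftrightarrow> (\<forall>i. coeff p i \<in> L)"

lemma Lpoly_0: "subfield L \<Longrightarrow> Lpoly L 0"
  by (auto simp: Lpoly_def intro: sf0)
lemma Lpoly_const: "subfield L \<Longrightarrow> c \<in> L \<Longrightarrow> Lpoly L [:c:]"
  by (auto simp: Lpoly_def coeff_pCons split: nat.split intro: sf0)
lemma Lpoly_X: "subfield L \<Longrightarrow> Lpoly L [:0,1:]"
  by (auto simp: Lpoly_def coeff_pCons split: nat.split intro: sf0 sf1)
lemma Lpoly_monom: "subfield L \<Longrightarrow> c \<in> L \<Longrightarrow> Lpoly L (monom c n)"
  by (auto simp: Lpoly_def coeff_monom intro: sf0)
lemma Lpoly_add: "subfield L \<Longrightarrow> Lpoly L p \<Longrightarrow> Lpoly L q \<Longrightarrow> Lpoly L (p + q)"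
  by (auto simp: Lpoly_def intro: sfadd)
lemma Lpoly_diff: "subfield L \<Longrightarrow> Lpoly L p \<Longrightarrow> Lpoly L q \<Longrightarrow> Lpoly L (p - q)"
  by (auto simp: Lpoly_def intro: sfdiff)
lemma Lpoly_uminus: "subfield L \<Longrightarrow> Lpoly L p \<Longrightarrow> Lpoly L (- p)"
  by (auto simp: Lpoly_def intro: sfneg)
lemma Lpoly_mult: "subfield L \<Longrightarrow> Lpoly L p \<Longrightarrow> Lpoly L q \<Longrightarrow> Lpoly L (p * q)"
  unfolding Lpoly_def coeff_mult by (auto intro!: sfsum sfmult)
lemma Lpoly_smult: "subfield L \<Longrightarrow> c \<in> L \<Longrightarrow> Lpoly L q \<Longrightarrow> Lpoly L (smult c q)"
  by (auto simp: Lpoly_def intro: sfmult)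

lemma endo:
  assumes "field_endo f"
  shows endo0: "f 0 = 0" and endo1: "f 1 = 1"
    and endoadd: "f (x + y) = f x + f y" and endomult: "f (x * y) = f x * f y"
    and endoneg: "f (- x) = - f x" and endodiff: "f (x - y) = f x - f y"
    and endoinv: "f (inverse x) = inverse (f x)"
    and endodiv: "f (x / y) = f x / f y"
    and endopow: "f (x ^ n) = f x ^ n"
    and endo_eq0: "f x = 0 \<longleftrightarrow> x = 0"
proof -
  have A: "\<And>a b. f (a + b) = f a + f b" and M: "\<And>a b. f (a * b) = f a * f b" and Onee: "f 1 = 1"
    using assms by (auto simp: field_endo_def)
  show Z: "f 0 = 0" using A[of 0 0] by (metis add_0 add_cancel_right_right)
  show "f 1 = 1" by (fact Onee)
  show "f (x + y) = f x + f y" by (fact A)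
  show "f (x * y) = f x * f y" by (fact M)
  have N: "f (- x) = - f x" for x
  proof -
    have "f (- x) + f x = 0" using A[of "-x" x] Z by simp
    then show ?thesis by (simp add: eq_neg_iff_add_eq_0)
  qed
  then show "f (- x) = - f x" .
  show "f (x - y) = f x - f y"
  proof -
    have "f (x - y) + f y = f x" using A[of "x - y" y] by simp
    then show ?thesis by (simp add: eq_diff_eq)
  qed
  have I: "\<And>x. f (inverse x) = inverse (f x)"
  proof -
    fix x :: 'a
    show "f (inverse x) = inverse (f x)"
    proof (cases "x = 0")
      case True then show ?thesis using Z by simp
    next
      case False
      then have "f x * f (inverse x) = 1" using M[of x "inverse x"] Onee by simp
      from inverse_unique[OF this] show ?thesis by simp
    qed
  qed
  then show "f (inverse x) = inverse (f x)" .
  show "f (x / y) = f x / f y" using I M by (simp add: divide_inverse)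
  show "f (x ^ n) = f x ^ n" by (induction n) (simp_all add: M Onee)
  have "x \<noteq> 0 \<Longrightarrow> f x \<noteq> 0"
  proof
    assume "x \<noteq> 0" "f x = 0"
    then have "f x * f (inverse x) = 1" using M[of x "inverse x"] Onee by simp
    with \<open>f x = 0\<close> show False by simp
  qed
  then show "f x = 0 \<longleftrightarrow> x = 0" using Z by blast
qed

lemma endosum: "field_endo f \<Longrightarrow> f (sum g A) = (\<Sum>x\<in>A. f (g x))"
  by (induction A rule: infinite_finite_induct) (auto simp: endo0 endoadd)


definition PhiP :: "('a::field \<Rightarrow> 'a) \<Rightarrow> 'a \<Rightarrow> 'a poly \<Rightarrow> 'a poly" where
  "PhiP f \<alpha> p = (\<Sum>i\<le>degree p. monom (f (coeff p i) * \<alpha> ^ i) i)"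

lemma coeff_PhiP: "field_endo f \<Longrightarrow> coeff (PhiP f \<alpha> p) n = f (coeff p n) * \<alpha> ^ n"
  unfolding PhiP_def coeff_sum coeff_monom
  by (cases "n \<le> degree p") (auto simp: sum.delta coeff_eq_0 endo0)

lemma poly_PhiP: "field_endo f \<Longrightarrow> f w = \<alpha> * w \<Longrightarrow> poly (PhiP f \<alpha> p) w = f (poly p w)"
  unfolding PhiP_def poly_sum poly_monom
  by (simp add: poly_altdef[of p w] endosum endomult endopow power_mult_distrib mult_ac)

lemma Lpoly_PhiP: "subfield L \<Longrightarrow> field_endo f \<Longrightarrow> f ` L \<subseteq> L \<Longrightarrow> \<alpha> \<in> L \<Longrightarrow> Lpoly L p
   \<Longrightarrow> Lpoly L (PhiP f \<alpha> p)"
  unfolding Lpoly_def coeff_PhiP by (auto intro!: sfmult sfpow)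

lemma degree_PhiP: "field_endo f \<Longrightarrow> degree (PhiP f \<alpha> p) \<le> degree p"
  by (rule degree_le) (auto simp: coeff_PhiP coeff_eq_0 endo0)

definition Phif :: "('a::field \<Rightarrow> 'a) \<Rightarrow> 'a \<Rightarrow> 'a fps \<Rightarrow> 'a fps" where
  "Phif f \<alpha> F = Abs_fps (\<lambda>n. f (fps_nth F n) * \<alpha> ^ n)"

lemma Phif_nth [simp]: "fps_nth (Phif f \<alpha> F) n = f (fps_nth F n) * \<alpha> ^ n"
  by (simp add: Phif_def)

lemma Phif_mult: "field_endo f \<Longrightarrow> Phif f \<alpha> (F * G) = Phif f \<alpha> F * Phif f \<alpha> G"
proof (rule fps_ext)
  fix n
  assume e: "field_endo f"
  have "fps_nth (Phif f \<alpha> (F * G)) n = (\<Sum>i=0..n. f (fps_nth F i) * f (fps_nth G (n-i)) * \<alpha>^n)"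
    using e by (simp add: fps_mult_nth endosum endomult sum_distrib_right)
  also have "\<dots> = (\<Sum>i=0..n. (f (fps_nth F i) * \<alpha>^i) * (f (fps_nth G (n-i)) * \<alpha>^(n-i)))"
  proof (rule sum.cong)
    fix i assume "i \<in> {0..n}"
    then have "\<alpha>^n = \<alpha>^i * \<alpha>^(n-i)" by (simp add: power_add[symmetric])
    then show "f (fps_nth F i) * f (fps_nth G (n-i)) * \<alpha>^n = (f (fps_nth F i) * \<alpha>^i) * (f (fps_nth G (n-i)) * \<alpha>^(n-i))"
      by (simp add: mult_ac)
  qed simp
  also have "\<dots> = fps_nth (Phif f \<alpha> F * Phif f \<alpha> G) n" by (simp add: fps_mult_nth)
  finally show "fps_nth (Phif f \<alpha> (F * G)) n = fps_nth (Phif f \<alpha> F * Phif f \<alpha> G) n" .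
qed

lemma Phif_add: "field_endo f \<Longrightarrow> Phif f \<alpha> (F + G) = Phif f \<alpha> F + Phif f \<alpha> G"
  by (rule fps_ext) (simp add: endoadd distrib_right)

lemma Phif_const: "field_endo f \<Longrightarrow> Phif f \<alpha> (fps_const c) = fps_const (f c)"
  by (rule fps_ext) (simp add: endo0)

lemma Phif_Xpow: "field_endo f \<Longrightarrow> Phif f \<alpha> (fps_X ^ k) = fps_const (\<alpha> ^ k) * fps_X ^ k"
  by (rule fps_ext) (simp add: endo0 endo1)

lemma Phif_of_poly: "field_endo f \<Longrightarrow> fps_of_poly (PhiP f \<alpha> p) = Phif f \<alpha> (fps_of_poly p)"
  by (rule fps_ext) (simp add: coeff_PhiP)

lemma Ldiv:
  assumes L: "subfield L" and B: "Lpoly L B" "B \<noteq> 0"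
  shows "Lpoly L A \<Longrightarrow> \<exists>q s. Lpoly L q \<and> Lpoly L s \<and> A = q * B + s \<and> (s = 0 \<or> degree s < degree B)"
proof (induction "degree A" arbitrary: A rule: less_induct)
  case less
  show ?case
  proof (cases "A = 0 \<or> degree A < degree B")
    case True
    then show ?thesis using less.prems Lpoly_0[OF L] by (intro exI[of _ 0] exI[of _ A]) auto
  next
    case False
    then have A0: "A \<noteq> 0" and dAB: "degree B \<le> degree A" by auto
    define c where "c = lead_coeff A / lead_coeff B"
    define M where "M = monom c (degree A - degree B)"
    define A' where "A' = A - M * B"
    have LM: "Lpoly L M" unfolding M_def c_def
      using less.prems B by (intro Lpoly_monom L sfdiv) (auto simp: Lpoly_def)
    have LA': "Lpoly L A'" unfolding A'_def by (intro Lpoly_diff Lpoly_mult L less.prems LM B)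
    have dMB: "degree (M * B) \<le> degree A"
    proof -
      have "degree (M * B) \<le> degree M + degree B" by (rule degree_mult_le)
      also have "\<dots> \<le> (degree A - degree B) + degree B" unfolding M_def
        using degree_monom_le by (intro add_right_mono) auto
      finally show ?thesis using dAB by simp
    qed
    have dA': "degree A' \<le> degree A" unfolding A'_def
      using degree_diff_le[OF order.refl dMB] .
    have cA': "coeff A' (degree A) = 0"
    proof -
      have "coeff (M * B) (degree A) = c * lead_coeff B"
        unfolding M_def coeff_monom_mult using dAB by simp
      also have "\<dots> = lead_coeff A" unfolding c_def using B by simp
      finally show ?thesis unfolding A'_def by simp
    qed
    have "A' = 0 \<or> degree A' < degree A"
    proof (rule ccontr)
      assume "\<not> ?thesis"
      then have "A' \<noteq> 0" "degree A' = degree A" using dA' by auto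
      with cA' show False by (metis leading_coeff_0_iff)
    qed
    then show ?thesis
    proof
      assume "A' = 0"
      then have "A = M * B + 0" unfolding A'_def by simp
      then show ?thesis using LM Lpoly_0[OF L] by blast
    next
      assume "degree A' < degree A"
      from less.hyps[OF this LA'] obtain q s where qs: "Lpoly L q" "Lpoly L s" "A' = q * B + s"
        "s = 0 \<or> degree s < degree B" by blast
      have "A = (q + M) * B + s" using qs(3) unfolding A'_def by (simp add: algebra_simps)
      moreover have "Lpoly L (q + M)" by (intro Lpoly_add L qs LM)
      ultimately show ?thesis using qs by blast
    qed
  qed
qed

definition ratset :: "'a::field set \<Rightarrow> 'a \<Rightarrow> 'a set" where
  "ratset L w = {poly P w / poly Q w | P Q. Lpoly L P \<and> Lpoly L Q \<and> poly Q w \<noteq> 0}"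

lemma ratset_subfield:
  assumes L: "subfield L"
  shows "subfield (ratset L w)"
proof -
  have one: "Lpoly L 1" using Lpoly_const[OF L sf1[OF L]] by (simp add: one_pCons)
  have "0 \<in> ratset L w" unfolding ratset_def using Lpoly_0[OF L] one by force
  moreover have "1 \<in> ratset L w" unfolding ratset_def using one by force
  moreover have "x + y \<in> ratset L w \<and> x * y \<in> ratset L w" if xy: "x \<in> ratset L w" "y \<in> ratset L w" for x y
  proof -
    obtain P Q where 1: "Lpoly L P" "Lpoly L Q" "poly Q w \<noteq> 0" "x = poly P w / poly Q w"
      using xy(1) unfolding ratset_def by blast
    obtain P' Q' where 2: "Lpoly L P'" "Lpoly L Q'" "poly Q' w \<noteq> 0" "y = poly P' w / poly Q' w"
      using xy(2) unfolding ratset_def by blast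
    have "x + y = poly (P * Q' + P' * Q) w / poly (Q * Q') w"
      using 1(3) 2(3) unfolding 1(4) 2(4) by (simp add: field_simps)
    moreover have "x * y = poly (P * P') w / poly (Q * Q') w"
      using 1 2 by simp
    moreover have "Lpoly L (P * Q' + P' * Q)" "Lpoly L (P * P')" "Lpoly L (Q * Q')"
      using 1 2 by (auto intro!: Lpoly_add Lpoly_mult L)
    moreover have "poly (Q * Q') w \<noteq> 0" using 1 2 by simp
    ultimately show ?thesis unfolding ratset_def by blast
  qed
  moreover have "- x \<in> ratset L w \<and> inverse x \<in> ratset L w" if xx: "x \<in> ratset L w" for x
  proof -
    obtain P Q where 1: "Lpoly L P" "Lpoly L Q" "poly Q w \<noteq> 0" "x = poly P w / poly Q w"
      using xx unfolding ratset_def by blast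
    have "- x = poly (- P) w / poly Q w" using 1 by simp
    moreover have "Lpoly L (- P)" using 1 by (intro Lpoly_uminus L)
    ultimately have "- x \<in> ratset L w" using 1 unfolding ratset_def by blast
    moreover have "inverse x \<in> ratset L w"
    proof (cases "poly P w = 0")
      case True
      then have "inverse x = poly 0 w / poly 1 w" using 1 by simp
      then show ?thesis unfolding ratset_def using Lpoly_0[OF L] one by force
    next
      case False
      then have "inverse x = poly Q w / poly P w" using 1 by simp
      then show ?thesis unfolding ratset_def using 1 False by blast
    qed
    ultimately show ?thesis by blast
  qed
  ultimately show ?thesis unfolding subfield_def by blast
qed

lemma field_gen_ratset:
  assumes L: "subfield L" and y: "y \<in> field_gen L {w}"
  shows "\<exists>P Q. Lpoly L P \<and> Lpoly L Q \<and> poly Q w \<noteq> 0 \<and> y = poly P w / poly Q w"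
proof -
  have one: "Lpoly L 1" using Lpoly_const[OF L sf1[OF L]] by (simp add: one_pCons)
  have "L \<subseteq> ratset L w"
  proof
    fix c assume "c \<in> L"
    then have "c = poly [:c:] w / poly 1 w" "Lpoly L [:c:]" using Lpoly_const[OF L] by auto
    then show "c \<in> ratset L w" unfolding ratset_def using one by force
  qed
  moreover have "w \<in> ratset L w"
    unfolding ratset_def using Lpoly_X[OF L] one by force
  ultimately have "y \<in> ratset L w"
    using y ratset_subfield[OF L] unfolding field_gen_def by blast
  then show ?thesis unfolding ratset_def by blast
qed

lemma fps_div_coeffs:
  assumes L: "subfield L" and Q: "\<And>n. fps_nth Q n \<in> L" "fps_nth Q 0 \<noteq> 0" and P: "\<And>n. fps_nth P n \<in> L"
    and Z: "Z * Q = P"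
  shows "fps_nth Z n \<in> L"
proof (induction n rule: less_induct)
  case (less n)
  have "fps_nth P n = (\<Sum>i=0..n. fps_nth Z i * fps_nth Q (n-i))" using Z[symmetric] by (simp add: fps_mult_nth)
  also have "\<dots> = (\<Sum>i=0..<n. fps_nth Z i * fps_nth Q (n-i)) + fps_nth Z n * fps_nth Q 0"
    by (simp add: atLeastLessThanSuc_atLeastAtMost[symmetric])
  finally have "fps_nth Z n = (fps_nth P n - (\<Sum>i=0..<n. fps_nth Z i * fps_nth Q (n-i))) / fps_nth Q 0"
    using Q(2) by (simp add: field_simps)
  also have "\<dots> \<in> L"
    using less.IH by (intro sfdiv sfdiff sfsum sfmult L P Q) auto
  finally show ?case .
qed


lemma case_transc:
  assumes L: "subfield L" and e: "field_endo f" and fL: "f ` L \<subseteq> L"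
    and al: "\<alpha> \<in> L" "\<alpha> \<noteq> 0" and fw: "f w = \<alpha> * w" and ab: "a \<in> L" "b \<in> L"
    and PQ: "Lpoly L P" "Lpoly L Q" "poly Q w \<noteq> 0"
    and eq: "f (poly P w / poly Q w) = a * (poly P w / poly Q w) + b"
    and T: "\<And>p. Lpoly L p \<Longrightarrow> p \<noteq> 0 \<Longrightarrow> poly p w \<noteq> 0"
  shows "\<exists>c\<in>L. f c = a * c + b"
proof -
  have hq: "poly (PhiP f \<alpha> Q) w \<noteq> 0"
    using poly_PhiP[OF e fw] PQ(3) by (simp add: endo_eq0[OF e])
  have fy: "f (poly P w / poly Q w) = poly (PhiP f \<alpha> P) w / poly (PhiP f \<alpha> Q) w"
    using poly_PhiP[OF e fw] by (simp add: endodiv[OF e])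
  have "poly (PhiP f \<alpha> P) w * poly Q w = (a * poly P w + b * poly Q w) * poly (PhiP f \<alpha> Q) w"
    using eq hq PQ(3) unfolding fy by (simp add: field_simps)
  then have R0: "poly (PhiP f \<alpha> P * Q - (smult a P + smult b Q) * PhiP f \<alpha> Q) w = 0"
    by simp
  have LR: "Lpoly L (PhiP f \<alpha> P * Q - (smult a P + smult b Q) * PhiP f \<alpha> Q)"
    by (intro Lpoly_diff Lpoly_mult Lpoly_add Lpoly_smult Lpoly_PhiP L e fL al ab PQ)
  have peq: "PhiP f \<alpha> P * Q = (smult a P + smult b Q) * PhiP f \<alpha> Q"
    using T[OF LR] R0 by auto
  define Pf where "Pf = fps_of_poly P"
  define Qf where "Qf = fps_of_poly Q"
  have feq: "Phif f \<alpha> Pf * Qf = (fps_const a * Pf + fps_const b * Qf) * Phif f \<alpha> Qf"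
    using arg_cong[OF peq, of fps_of_poly]
    by (simp add: fps_of_poly_mult fps_of_poly_add fps_of_poly_smult Phif_of_poly[OF e] Pf_def Qf_def)
  have "Q \<noteq> 0" using PQ(3) by auto
  then have Qf0: "Qf \<noteq> 0" unfolding Qf_def by simp
  define k where "k = subdegree Qf"
  define Q1 where "Q1 = fps_shift k Qf"
  have QQ1: "Qf = Q1 * fps_X ^ k" unfolding Q1_def k_def by (simp add: fps_shift_times_fps_X_power)
  have Q10: "fps_nth Q1 0 \<noteq> 0" unfolding Q1_def k_def using Qf0 by simp
  have XK: "(fps_X ^ k :: 'a fps) \<noteq> 0" by simp
  have "Phif f \<alpha> Pf * Q1 * fps_X ^ k
      = ((fps_const a * Pf + fps_const b * Q1 * fps_X ^ k) * Phif f \<alpha> Q1 * fps_const (\<alpha> ^ k)) * fps_X ^ k"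
    using feq unfolding QQ1 by (simp add: Phif_mult[OF e] Phif_Xpow[OF e] mult_ac)
  then have eq2: "Phif f \<alpha> Pf * Q1
      = (fps_const a * Pf + fps_const b * Q1 * fps_X ^ k) * Phif f \<alpha> Q1 * fps_const (\<alpha> ^ k)"
    using XK by (metis mult_right_cancel)
  define Z where "Z = Pf * inverse Q1"
  have ZQ: "Z * Q1 = Pf" unfolding Z_def using Q10 by (simp add: mult.assoc inverse_mult_eq_1)
  have PQ1: "Phif f \<alpha> Q1 \<noteq> 0"
  proof
    assume "Phif f \<alpha> Q1 = 0"
    then have "fps_nth (Phif f \<alpha> Q1) 0 = 0" by simp
    then show False using Q10 by (simp add: endo_eq0[OF e])
  qed
  have Q1nz: "Q1 \<noteq> 0" using Q10 by auto
  have "Phif f \<alpha> Z * (Phif f \<alpha> Q1 * Q1)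
      = (fps_const (\<alpha> ^ k) * (fps_const a * Z + fps_const b * fps_X ^ k)) * (Phif f \<alpha> Q1 * Q1)"
    using eq2 unfolding ZQ[symmetric] by (simp add: Phif_mult[OF e] algebra_simps)
  then have Zeq: "Phif f \<alpha> Z = fps_const (\<alpha> ^ k) * (fps_const a * Z + fps_const b * fps_X ^ k)"
    using PQ1 Q1nz by (metis mult_right_cancel no_zero_divisors)
  have "f (fps_nth Z k) * \<alpha> ^ k = \<alpha> ^ k * (a * fps_nth Z k + b)"
    using arg_cong[OF Zeq, of "\<lambda>F. fps_nth F k"] by simp
  then have sol: "f (fps_nth Z k) = a * fps_nth Z k + b" using al(2) by (simp add: mult.commute)
  have "fps_nth Z k \<in> L"
  proof (rule fps_div_coeffs[OF L _ Q10 _ ZQ])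
    show "fps_nth Q1 n \<in> L" for n using PQ(2) unfolding Q1_def Qf_def Lpoly_def by simp
    show "fps_nth Pf n \<in> L" for n using PQ(1) unfolding Pf_def Lpoly_def by simp
  qed
  with sol show ?thesis by blast
qed


lemma case_alg:
  assumes L: "subfield L" and e: "field_endo f" and fL: "f ` L \<subseteq> L"
    and al: "\<alpha> \<in> L" "\<alpha> \<noteq> 0" and fw: "f w = \<alpha> * w" and ab: "a \<in> L" "b \<in> L"
    and PQ: "Lpoly L P" "Lpoly L Q" "poly Q w \<noteq> 0"
    and eq: "f (poly P w / poly Q w) = a * (poly P w / poly Q w) + b"
    and A: "Lpoly L m0" "m0 \<noteq> 0" "poly m0 w = 0"
  shows "\<exists>c\<in>L. f c = a * c + b"
proof -
  obtain m where m: "Lpoly L m" "m \<noteq> 0" "poly m w = 0"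
    and mmin: "\<And>p. Lpoly L p \<and> p \<noteq> 0 \<and> poly p w = 0 \<Longrightarrow> degree m \<le> degree p"
    using ex_has_least_nat[of "\<lambda>p. Lpoly L p \<and> p \<noteq> 0 \<and> poly p w = 0" m0 degree] A by blast
  define d where "d = degree m"
  have small: "p = 0" if "Lpoly L p" "degree p < d" "poly p w = 0" for p
    using mmin[of p] that unfolding d_def by fastforce
  have const: "poly p w = coeff p 0" if "degree p = 0" for p :: "'a poly"
    using that by (simp add: poly_altdef)
  have dpos: "d > 0"
  proof (rule ccontr)
    assume "\<not> d > 0"
    then have "degree m = 0" unfolding d_def by simp
    then have "poly m w = lead_coeff m" using const by simp
    with m show False by simp
  qed
  have reduce: "\<exists>r. Lpoly L r \<and> degree r < d \<and> poly r w = poly A w" if LA: "Lpoly L A" for A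
  proof -
    obtain q s where qs: "Lpoly L q" "Lpoly L s" "A = q * m + s" "s = 0 \<or> degree s < degree m"
      using Ldiv[OF L m(1,2) LA] by blast
    have "poly s w = poly A w" using qs(3) m(3) by simp
    moreover have "degree s < d" using qs(4) dpos unfolding d_def by auto
    ultimately show ?thesis using qs(2) by blast
  qed
  have bez0: "\<And>R. degree R = n \<Longrightarrow> Lpoly L R \<Longrightarrow> degree R < d \<Longrightarrow> poly R w \<noteq> 0
      \<Longrightarrow> \<exists>S. Lpoly L S \<and> poly R w * poly S w = 1" for n
  proof (induction n rule: less_induct)
    case (less n R)
    show ?case
    proof (cases "degree R = 0")
      case True
      then have c: "poly R w = coeff R 0" using const by simp
      have "coeff R 0 \<in> L" using less.prems(2) unfolding Lpoly_def by simp
      then have "Lpoly L [:inverse (coeff R 0):]" by (intro Lpoly_const L sfinv)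
      moreover have "poly R w * poly [:inverse (coeff R 0):] w = 1"
        using c less.prems(4) by simp
      ultimately show ?thesis by blast
    next
      case False
      have R0: "R \<noteq> 0" using less.prems(4) by auto
      obtain q s where qs: "Lpoly L q" "Lpoly L s" "m = q * R + s" "s = 0 \<or> degree s < degree R"
        using Ldiv[OF L less.prems(2) R0 m(1)] by blast
      have sw: "poly s w = - (poly q w * poly R w)"
        using m(3) arg_cong[OF qs(3), of "\<lambda>p. poly p w"] by (simp add: eq_neg_iff_add_eq_0 add.commute)
      show ?thesis
      proof (cases "poly s w = 0")
        case True
        have "s = 0"
        proof (cases "s = 0")
          case False
          then have "degree s < d" using qs(4) less.prems(3) by auto
          then show ?thesis using small[OF qs(2) _ True] by simp
        qed
        then have mqR: "m = q * R" using qs(3) by simp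
        then have q0: "q \<noteq> 0" using m(2) by auto
        have "poly q w = 0" using True sw less.prems(4) by simp
        moreover have "degree q < d"
          using degree_mult_eq[OF q0 R0] mqR False unfolding d_def by simp
        ultimately show ?thesis using small[OF qs(1)] q0 by blast
      next
        case False
        then have "s \<noteq> 0" by auto
        then have ds: "degree s < degree R" using qs(4) by simp
        have "\<exists>S. Lpoly L S \<and> poly s w * poly S w = 1"
          using less.IH[OF _ refl qs(2) _ False] ds less.prems(1,3) by simp
        then obtain S where S: "Lpoly L S" "poly s w * poly S w = 1" by blast
        have "Lpoly L (- (q * S))" by (intro Lpoly_uminus Lpoly_mult L qs(1) S(1))
        moreover have "poly R w * poly (- (q * S)) w = 1" using S(2) unfolding sw by (simp add: mult_ac)
        ultimately show ?thesis by blast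
      qed
    qed
  qed
  obtain Qr where Qr: "Lpoly L Qr" "degree Qr < d" "poly Qr w = poly Q w"
    using reduce[OF PQ(2)] by blast
  obtain S where S: "Lpoly L S" "poly Qr w * poly S w = 1"
    using bez0[OF refl Qr(1,2)] Qr(3) PQ(3) by auto
  obtain r where r: "Lpoly L r" "degree r < d" "poly r w = poly (P * S) w"
    using reduce[of "P * S"] Lpoly_mult[OF L PQ(1) S(1)] by blast
  have y: "poly P w / poly Q w = poly r w"
  proof -
    have "inverse (poly Q w) = poly S w" using inverse_unique[of "poly Q w" "poly S w"] S(2) Qr(3) by simp
    then show ?thesis using r(3) by (simp add: divide_inverse)
  qed
  define D where "D = PhiP f \<alpha> r - smult a r - [:b:]"
  have LD: "Lpoly L D" unfolding D_def
    by (intro Lpoly_diff Lpoly_smult Lpoly_const Lpoly_PhiP L e fL al ab r(1))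
  have "degree D \<le> d - 1" unfolding D_def
    using degree_PhiP[OF e, of \<alpha> r] degree_smult_le[of a r] r(2)
    by (intro degree_diff_le) auto
  then have dD: "degree D < d" using dpos by simp
  have "poly D w = 0" unfolding D_def using eq unfolding y poly_PhiP[OF e fw, symmetric] by simp
  then have "D = 0" using small[OF LD dD] by simp
  then have "coeff D 0 = 0" by simp
  then have "f (coeff r 0) = a * coeff r 0 + b" unfolding D_def by (simp add: coeff_PhiP[OF e] algebra_simps)
  moreover have "coeff r 0 \<in> L" using r(1) unfolding Lpoly_def by simp
  ultimately show ?thesis by blast
qed

theorem lemma4p7:
  fixes e :: "complex \<Rightarrow> 'a::field" and \<phi> \<sigma> :: "'a \<Rightarrow> 'a" and K L :: "'a set"
    and a b w \<alpha> :: 'a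
  assumes emb: "complex_emb e"
    and setting: "setting_2S e \<phi> \<sigma> K \<or> setting_2Q e \<phi> \<sigma> K \<or> setting_2M e \<phi> \<sigma> K"
    and auts: "base_auts e \<phi> \<sigma> K"
    and a: "a \<in> K" "a \<noteq> 0" and b: "b \<in> K"
    and PV: "sigma_PV_field e \<phi> \<sigma> K (mat2 a b 0 1)"
    and L: "subfield L" "K \<subseteq> L" "\<phi> ` L \<subseteq> L"
    and w: "w \<noteq> 0" "\<phi> w / w = \<alpha>" "\<alpha> \<in> L" "\<alpha> \<noteq> 0"
    and sol: "\<exists>y \<in> field_gen L {w}. \<phi> y = a * y + b"
  shows "\<exists>y \<in> L. \<phi> y = a * y + b"
proof -
  have e: "field_endo \<phi>" using PV unfolding sigma_PV_field_def by blast
  obtain y where y: "y \<in> field_gen L {w}" "\<phi> y = a * y + b" using sol by blast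
  obtain P Q where PQ: "Lpoly L P" "Lpoly L Q" "poly Q w \<noteq> 0" "y = poly P w / poly Q w"
    using field_gen_ratset[OF L(1) y(1)] by blast
  have fw: "\<phi> w = \<alpha> * w" using w(1,2) by (simp add: field_simps)
  have ab: "a \<in> L" "b \<in> L" using a b L(2) by auto
  have eq: "\<phi> (poly P w / poly Q w) = a * (poly P w / poly Q w) + b" using y(2) PQ(4) by simp
  show ?thesis
  proof (cases "\<exists>m. Lpoly L m \<and> m \<noteq> 0 \<and> poly m w = 0")
    case True
    then obtain m where "Lpoly L m" "m \<noteq> 0" "poly m w = 0" by blast
    from case_alg[OF L(1) e L(3) w(3,4) fw ab PQ(1-3) eq this] show ?thesis .
  next
    case False
    then have "\<And>p. Lpoly L p \<Longrightarrow> p \<noteq> 0 \<Longrightarrow> poly p w \<noteq> 0" by blast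
    from case_transc[OF L(1) e L(3) w(3,4) fw ab PQ(1-3) eq this] show ?thesis .
  qed
qed

end
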